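(* Let $D,\ell,\beta>0$. For $a>0$ put $\omega_N=\frac{\sqrt{a\beta}}2$, $\xi=\frac{D\ell}{4}\sqrt{\beta/a}$. (i) If $D^2\ell\beta<8$ and $a=\frac{4}{D^2\beta}$, and $c=\frac{e^{D\omega_N\xi}}{\cos(D\omega_N\sqrt{1-\xi^2})-\frac{\xi}{\sqrt{1-\xi^2}}\sin(D\omega_N\sqrt{1-\xi^2})}$, then $$a\ge\frac{\ell}{2}\quad\text{and}\quad c\le\frac{2e}{(1-\frac{D^2\ell\beta}{8})^2}.$$ (ii) If $a=\frac{D^2\ell^2\beta}{16}(1-\tanh^2(\frac{D^2\ell\beta}{8}))$ and $c=\frac{e^{D\omega_N\xi}}{\cosh(D\omega_N\sqrt{\xi^2-1})-\frac{\xi}{\sqrt{\xi^2-1}}\sinh(D\omega_N\sqrt{\xi^2-1})}$, then $$a\ge\frac{D^2\ell^2\beta}{16}\exp\Big(-\frac{D^2\ell\beta}{4}\Big)\quad\text{and}\quad c\le\frac{4}{D^2\ell\beta}\exp\Big(\frac{D^2\ell\beta}{2}\Big).$$ *)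

theory Defs
  imports Complex_Main
begin

definition omegaN :: "real \<Rightarrow> real \<Rightarrow> real" where
  "omegaN \<beta> a = sqrt (a * \<beta>) / 2"

definition xi :: "real \<Rightarrow> real \<Rightarrow> real \<Rightarrow> real \<Rightarrow> real" where
  "xi D l \<beta> a = D * l / 4 * sqrt (\<beta> / a)"

end

theory Submission
  imports Defs
begin

lemma sinh_ge_self: assumes "0 \<le> v" shows "v \<le> sinh (v::real)"
proof -
  have "(\<lambda>x. sinh x - x) 0 \<le> (\<lambda>x. sinh x - x) v"
  proof (rule DERIV_nonneg_imp_nondecreasing[OF assms])
    fix x :: real
    show "\<exists>y. ((\<lambda>x. sinh x - x) has_real_derivative y) (at x) \<and> 0 \<le> y"
      by (rule exI[of _ "cosh x - 1"]) (auto intro!: derivative_eq_intros simp: cosh_real_ge_1)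
  qed
  then show ?thesis by simp
qed

lemma cos_lb: "1 - s^2/2 \<le> cos (s::real)"
proof -
  have "cos s = cos (2 * (s/2))" by simp
  also have "\<dots> = 1 - 2 * sin (s/2)^2" by (rule cos_double_sin)
  finally have c: "cos s = 1 - 2 * sin (s/2)^2" .
  have "sin (s/2)^2 = \<bar>sin (s/2)\<bar>^2" by simp
  also have "\<dots> \<le> \<bar>s/2\<bar>^2" by (rule power_mono[OF abs_sin_x_le_abs_x]) simp
  also have "\<dots> = s^2/4" by (simp add: power2_eq_square)
  finally show ?thesis using c by linarith
qed

lemma part1:
  fixes D l \<beta> :: real
  assumes D: "D > 0" and l: "l > 0" and b: "\<beta> > 0" and K: "D^2 * l * \<beta> < 8"
  shows "let a = 4 / (D^2 * \<beta>); w = omegaN \<beta> a; x = xi D l \<beta> a;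
           c = exp (D * w * x) /
               (cos (D * w * sqrt (1 - x^2)) - x / sqrt (1 - x^2) * sin (D * w * sqrt (1 - x^2)))
       in a \<ge> l / 2 \<and> c \<le> 2 * exp 1 / (1 - D^2 * l * \<beta> / 8)^2"
proof -
  define a where "a = 4 / (D^2 * \<beta>)"
  have apos: "a > 0" using D b by (simp add: a_def)
  have "a * \<beta> = (2/D)^2" using D b by (simp add: a_def field_simps power2_eq_square)
  hence "sqrt (a*\<beta>) = 2/D" using D by simp
  hence w: "omegaN \<beta> a = 1/D" by (simp add: omegaN_def)
  have "\<beta> / a = (D*\<beta>/2)^2" using D b by (simp add: a_def field_simps power2_eq_square)
  hence "sqrt (\<beta>/a) = D*\<beta>/2" using D b by simp
  hence x: "xi D l \<beta> a = D^2*l*\<beta>/8" by (simp add: xi_def power2_eq_square)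
  define x where "x = D^2*l*\<beta>/8"
  have x0: "0 < x" using D l b by (simp add: x_def)
  have x1: "x < 1" using K by (simp add: x_def)
  define s where "s = sqrt (1 - x^2)"
  have xx: "x^2 < 1" using power_strict_mono[of x 1 2] x0 x1 by simp
  have s0: "0 < s" using xx by (simp add: s_def)
  have s1: "s \<le> 1" using x0 by (simp add: s_def)
  have ss: "s^2 = 1 - x^2" using xx by (simp add: s_def)
  have "a \<ge> l/2" using D b K by (simp add: a_def field_simps)
  moreover have "exp x / (cos s - x / s * sin s) \<le> 2 * exp 1 / (1 - x)^2"
  proof -
    have "sin s \<le> s" by (rule sin_x_le_x) (use s0 in simp)
    hence "x / s * sin s \<le> x" using s0 x0 by (simp add: field_simps)
    hence d1: "cos s - x / s * sin s \<ge> 1 - s^2/2 - x" using cos_lb[of s] by linarith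
    have "1 - s^2/2 - x = (1-x)^2/2" using ss by (simp add: power2_eq_square algebra_simps)
    hence den: "cos s - x / s * sin s \<ge> (1-x)^2/2" using d1 by linarith
    have dpos: "(1-x)^2/2 > 0" using x1 by simp
    have "exp x / (cos s - x / s * sin s) \<le> exp x / ((1-x)^2/2)"
    proof (rule divide_left_mono[OF den])
      have "cos s - x / s * sin s > 0" using dpos den by linarith
      thus "0 < (cos s - x / s * sin s) * ((1 - x)\<^sup>2 / 2)" using dpos by simp
    qed simp
    also have "\<dots> \<le> exp 1 / ((1-x)^2/2)"
      by (rule divide_right_mono) (use x1 dpos in auto)
    also have "\<dots> = 2 * exp 1 / (1 - x)^2" by simp
    finally show ?thesis .
  qed
  ultimately show ?thesis using D
    unfolding Let_def a_def[symmetric] w x x_def[symmetric] s_def[symmetric]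
    by (simp add: x_def)
qed

lemma part2:
  fixes D l \<beta> :: real
  assumes D: "D > 0" and l: "l > 0" and b: "\<beta> > 0"
  shows "let a = D^2 * l^2 * \<beta> / 16 * (1 - (tanh (D^2 * l * \<beta> / 8))^2);
           w = omegaN \<beta> a; x = xi D l \<beta> a;
           c = exp (D * w * x) /
               (cosh (D * w * sqrt (x^2 - 1)) - x / sqrt (x^2 - 1) * sinh (D * w * sqrt (x^2 - 1)))
       in a \<ge> D^2 * l^2 * \<beta> / 16 * exp (- (D^2 * l * \<beta> / 4)) \<and>
          c \<le> 4 / (D^2 * l * \<beta>) * exp (D^2 * l * \<beta> / 2)"
proof -
  define t where "t = D^2 * l * \<beta> / 8"
  have t0: "t > 0" using D l b by (simp add: t_def)
  define C where "C = cosh t"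
  define S where "S = sinh t"
  define E where "E = exp t"
  have C0: "C > 0" by (simp add: C_def)
  have S0: "S > 0" using t0 by (simp add: S_def)
  have CS: "C^2 = S^2 + 1" by (simp add: C_def S_def cosh_square_eq)
  have CpS: "C + S = E" by (simp add: C_def S_def E_def cosh_plus_sinh)
  have CmS: "C - S = exp (-t)" by (simp add: C_def S_def cosh_minus_sinh)
  have E0: "E > 0" by (simp add: E_def)
  define q where "q = D * l * sqrt \<beta> / 4"
  have q0: "q > 0" using D l b by (simp add: q_def)
  have qq: "q^2 = D^2 * l^2 * \<beta> / 16" using b by (simp add: q_def power_mult_distrib power_divide)
  have "1 - (tanh t)^2 = (C^2 - S^2) / C^2"
    using C0 by (simp add: tanh_def C_def[symmetric] S_def[symmetric] power_divide diff_divide_distrib)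
  also have "\<dots> = 1 / C^2" using CS by simp
  finally have th: "1 - (tanh t)^2 = 1 / C^2" .
  define a where "a = D^2 * l^2 * \<beta> / 16 * (1 - (tanh t)^2)"
  have a: "a = (q / C)^2" by (simp add: a_def th qq[symmetric] power_divide)
  have sa: "sqrt a = q / C" using q0 C0 by (simp add: a)
  have apos: "a > 0" using q0 C0 by (simp add: a)
  have w: "omegaN \<beta> a = q * sqrt \<beta> / (2 * C)"
    by (simp add: omegaN_def real_sqrt_mult sa)
  have x: "xi D l \<beta> a = C"
    using q0 C0 D l b by (simp add: xi_def real_sqrt_divide sa q_def field_simps)
  have sx: "sqrt (C^2 - 1) = S" using S0 CS by simp
  have Dwx: "D * (q * sqrt \<beta> / (2 * C)) * C = t"
    using C0 b by (simp add: q_def t_def field_simps power2_eq_square)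
  define u where "u = t * S / C"
  have Dws: "D * (q * sqrt \<beta> / (2 * C)) * S = u"
    using C0 b by (simp add: u_def q_def t_def field_simps power2_eq_square)
  have den: "cosh u - C / S * sinh u = sinh (t - u) / S"
    using S0 by (simp add: sinh_diff S_def[symmetric] C_def[symmetric] field_simps)
  have tu: "t - u = t * exp (-t) / C"
    using C0 CmS by (simp add: u_def field_simps)
  have tu0: "t - u > 0" using tu t0 C0 by simp
  have sh: "sinh (t - u) \<ge> t - u" using sinh_ge_self tu0 by simp
  have A0: "a \<ge> q^2 * exp (-(2*t))"
  proof -
    have "C \<le> E" using CpS S0 by linarith
    hence "C^2 \<le> E^2" using C0 by (simp add: power_mono)
    hence "1 / E^2 \<le> 1 / C^2" using C0 by (simp add: frac_le)
    moreover have "1 / E^2 = exp (-(2*t))"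
      by (simp add: E_def power2_eq_square exp_minus exp_add[symmetric] divide_inverse)
    ultimately have "q^2 * exp (-(2*t)) \<le> q^2 * (1 / C^2)" using q0 by (intro mult_left_mono) auto
    thus ?thesis by (simp add: a power_divide)
  qed
  have B0: "exp t / (sinh (t - u) / S) \<le> exp (4*t) / (2*t)"
  proof -
    have "exp t / (sinh (t - u) / S) = E * S / sinh (t - u)" by (simp add: E_def)
    also have "\<dots> \<le> E * S / (t - u)"
      by (rule divide_left_mono[OF sh]) (use E0 S0 tu0 in auto)
    also have "\<dots> = E * S * C / (t * exp (-t))" using C0 by (simp add: tu)
    also have "\<dots> = E^2 * (S * C) / t" using t0 by (simp add: E_def exp_minus field_simps power2_eq_square)
    also have "\<dots> \<le> E^2 * (E^2 / 4) / t"
    proof -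
      have "4 * (S*C) = (C+S)^2 - (C-S)^2" by (simp add: power2_eq_square algebra_simps)
      hence "4 * (S*C) \<le> E^2" using CpS by simp
      hence "S*C \<le> E^2/4" by simp
      hence "E^2 * (S*C) \<le> E^2 * (E^2/4)" using E0 by (intro mult_left_mono) auto
      thus ?thesis using t0 by (intro divide_right_mono) auto
    qed
    also have "\<dots> \<le> exp (4*t) / (2*t)"
    proof -
      have "E^2 * (E^2/4) = exp (4*t) / 4"
        by (simp add: E_def power2_eq_square exp_add[symmetric])
      thus ?thesis using t0 by (simp add: frac_le)
    qed
    finally show ?thesis .
  qed
  have e1: "-(2*t) = - (D^2 * l * \<beta> / 4)" "4*t = D^2 * l * \<beta> / 2" "2*t = D^2 * l * \<beta> / 4"
    by (simp_all add: t_def)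
  have A: "a \<ge> D^2 * l^2 * \<beta> / 16 * exp (- (D^2 * l * \<beta> / 4))"
    using A0 unfolding qq e1 .
  have B: "exp t / (sinh (t - u) / S) \<le> 4 / (D^2 * l * \<beta>) * exp (D^2 * l * \<beta> / 2)"
    using B0 unfolding e1 by (simp add: mult.commute)
  show ?thesis
    unfolding Let_def t_def[symmetric] a_def[symmetric] w x sx Dwx Dws den
    using A B by simp
qed

theorem lemma14:
  fixes D l \<beta> :: real
  assumes "D > 0" and "l > 0" and "\<beta> > 0"
  shows
   "(D^2 * l * \<beta> < 8 \<longrightarrow>
      (let a = 4 / (D^2 * \<beta>); w = omegaN \<beta> a; x = xi D l \<beta> a;
           c = exp (D * w * x) /
               (cos (D * w * sqrt (1 - x^2)) - x / sqrt (1 - x^2) * sin (D * w * sqrt (1 - x^2)))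
       in a \<ge> l / 2 \<and> c \<le> 2 * exp 1 / (1 - D^2 * l * \<beta> / 8)^2))
  \<and> (let a = D^2 * l^2 * \<beta> / 16 * (1 - (tanh (D^2 * l * \<beta> / 8))^2);
           w = omegaN \<beta> a; x = xi D l \<beta> a;
           c = exp (D * w * x) /
               (cosh (D * w * sqrt (x^2 - 1)) - x / sqrt (x^2 - 1) * sinh (D * w * sqrt (x^2 - 1)))
       in a \<ge> D^2 * l^2 * \<beta> / 16 * exp (- (D^2 * l * \<beta> / 4)) \<and>
          c \<le> 4 / (D^2 * l * \<beta>) * exp (D^2 * l * \<beta> / 2))"
    apply (rule conjI)
   apply (rule impI)
   apply (rule part1[OF assms])
   apply assumption
  apply (rule part2[OF assms])
  done

end
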